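(* For every zero-normalized $\Gamma_{m,n}$-semimodule $\Delta$, the partition $P(\widehat{\Delta})$ is the conjugate (transpose) of the partition $P(\Delta)$.
   Context: Let $m,n$ be coprime positive integers and $\Gamma_{m,n}=\{am+bn:a,b\in\mathbb{Z}_{\ge0}\}$. A $\Gamma_{m,n}$-semimodule is $\Delta\subset\mathbb{Z}_{\ge0}$ with $\Delta+\Gamma_{m,n}\subset\Delta$; zero-normalized means $\min\Delta=0$. Its dual is $\Delta^*=\{\varphi\in\mathbb{Z}:\varphi+\Delta\subset\Gamma_{m,n}\}$ and $\widehat\Delta=\Delta^*-\min\Delta^*$ (equivalently $\max(\mathbb{Z}\setminus\Delta)-(\mathbb{Z}\setminus\Delta)$). For a zero-normalized semimodule $\Delta$ (which contains all sufficiently large integers), $P(\Delta)$ is the partition whose boundary lattice path is obtained by reading the integers $0,1,2,\dots$ in order and taking a north unit step for each $x\in\Delta$ and a west unit step for each $x\notin\Delta$ (the path bounds the Young diagram of $P(\Delta)$ from above); equivalently, the parts of $P(\Delta)$ are the positive numbers among $\#\{x\in\Delta: x<y\}$, $y\in\mathbb{Z}_{\ge0}\setminus\Delta$. This $P(\Delta)$ is a simultaneous $m$-core and $n$-core (Anderson's correspondence). *)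

theory Defs
  imports Main "HOL-Library.Multiset"
begin

definition Gamma :: "nat \<Rightarrow> nat \<Rightarrow> int set" where
  "Gamma m n = {int a * int m + int b * int n | a b. True}"

definition is_semimodule :: "nat \<Rightarrow> nat \<Rightarrow> int set \<Rightarrow> bool" where
  "is_semimodule m n D \<longleftrightarrow> D \<subseteq> {0..} \<and> (\<forall>x\<in>D. \<forall>g\<in>Gamma m n. x + g \<in> D)"

definition zero_normalized :: "int set \<Rightarrow> bool" where
  "zero_normalized D \<longleftrightarrow> D \<noteq> {} \<and> Inf D = 0"

definition dual :: "nat \<Rightarrow> nat \<Rightarrow> int set \<Rightarrow> int set" where
  "dual m n D = {\<phi>. \<forall>d\<in>D. \<phi> + d \<in> Gamma m n}"

definition hat :: "nat \<Rightarrow> nat \<Rightarrow> int set \<Rightarrow> int set" where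
  "hat m n D = (\<lambda>\<phi>. \<phi> - Inf (dual m n D)) ` dual m n D"

text \<open>Partitions are represented as multisets of positive naturals (their parts).
  P D has as parts the positive numbers among #{x in D. x < y}, y a nonnegative gap of D.\<close>
definition partP :: "int set \<Rightarrow> nat multiset" where
  "partP D = filter_mset (\<lambda>k. 0 < k)
     (image_mset (\<lambda>y. card {x\<in>D. 0 \<le> x \<and> x < y}) (mset_set {y. 0 \<le> y \<and> y \<notin> D}))"

definition conjugate :: "nat multiset \<Rightarrow> nat multiset" where
  "conjugate M = filter_mset (\<lambda>k. 0 < k)
     (mset (map (\<lambda>j. size (filter_mset (\<lambda>p. j \<le> p) M)) [1..<Suc (sum_mset M)]))"

end

theory Submission
  imports Defs
begin

lemma gamma_rep:
  fixes m n :: nat and z :: int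
  assumes "0 < n" "coprime m n"
  shows "\<exists>a b. 0 \<le> a \<and> a < int n \<and> z = a * int m + b * int n"
proof -
  obtain u v where uv: "u * int m + v * int n = gcd (int m) (int n)" using bezout_int by blast
  have "gcd (int m) (int n) = 1" using assms(2) by (simp add: coprime_iff_gcd_eq_1 gcd_int_def)
  with uv have uv1: "u * int m + v * int n = 1" by simp
  define a where "a = (z*u) mod int n"
  define b where "b = z*v + ((z*u) div int n) * int m"
  have "z = z*u*int m + z*v*int n" using uv1 by (metis mult.assoc mult.commute mult.right_neutral distrib_left)
  also have "z*u = a + ((z*u) div int n) * int n" unfolding a_def by simp
  finally have "z = a * int m + b * int n" unfolding b_def by (simp add: algebra_simps)
  moreover have "0 \<le> a" "a < int n" unfolding a_def using assms(1) by auto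
  ultimately show ?thesis by blast
qed

lemma gamma_nonneg: "x \<in> Gamma m n \<Longrightarrow> 0 \<le> x"
  unfolding Gamma_def by auto

lemma gamma_iff:
  fixes m n :: nat and z a b :: int
  assumes "0 < n" "coprime m n" "0 \<le> a" "a < int n" "z = a * int m + b * int n"
  shows "z \<in> Gamma m n \<longleftrightarrow> 0 \<le> b"
proof
  assume "0 \<le> b"
  then have "z = int (nat a) * int m + int (nat b) * int n" using assms by simp
  then show "z \<in> Gamma m n" unfolding Gamma_def by blast
next
  assume "z \<in> Gamma m n"
  then obtain a' b' :: nat where z: "z = int a' * int m + int b' * int n" unfolding Gamma_def by blast
  have eq: "(int a' - a) * int m = (b - int b') * int n" using z assms(5) by (simp add: algebra_simps)
  have "int n dvd (int a' - a) * int m" using eq by simp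
  moreover have "coprime (int n) (int m)" using assms(2) by (simp add: coprime_commute)
  ultimately have "int n dvd (int a' - a)" using coprime_dvd_mult_left_iff by blast
  then obtain t where t: "int a' - a = int n * t" by (auto elim: dvdE)
  have "t \<ge> 0"
  proof (rule ccontr)
    assume "\<not> t \<ge> 0"
    then have "t \<le> -1" by simp
    then have "int n * t \<le> - int n" using assms(1) by (metis mult_left_mono mult_minus1_right of_nat_0_le_iff)
    then show False using t assms(4) by linarith
  qed
  have "(b - int b') * int n = int n * t * int m" using eq t by (metis mult.commute)
  then have "int n * (b - int b') = int n * (t * int m)" by (metis mult.commute mult.assoc)
  then have "b - int b' = t * int m" using assms(1) by simp
  then show "0 \<le> b" using \<open>t \<ge> 0\<close> by (smt (verit) of_nat_0_le_iff zero_le_mult_iff)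
qed

lemma gamma_sym:
  fixes m n :: nat and z :: int
  assumes "0 < m" "0 < n" "coprime m n"
  shows "z \<in> Gamma m n \<longleftrightarrow> int m * int n - int m - int n - z \<notin> Gamma m n"
proof -
  obtain a b where ab: "0 \<le> a" "a < int n" "z = a * int m + b * int n"
    using gamma_rep[OF assms(2,3)] by blast
  have "int m * int n - int m - int n - z = (int n - 1 - a) * int m + (-1 - b) * int n"
    using ab(3) by (simp add: algebra_simps)
  then have "int m * int n - int m - int n - z \<in> Gamma m n \<longleftrightarrow> 0 \<le> -1 - b"
    using gamma_iff[OF assms(2,3)] ab by simp
  moreover have "z \<in> Gamma m n \<longleftrightarrow> 0 \<le> b" using gamma_iff[OF assms(2,3) ab] .
  ultimately show ?thesis by linarith
qed


lemma zero_in: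
  assumes "is_semimodule m n D" "zero_normalized D"
  shows "0 \<in> D"
proof (rule ccontr)
  assume "0 \<notin> D"
  have sub: "D \<subseteq> {0..}" using assms(1) unfolding is_semimodule_def by blast
  have ne: "D \<noteq> {}" and inf: "Inf D = 0" using assms(2) unfolding zero_normalized_def by auto
  have "\<And>x. x \<in> D \<Longrightarrow> 1 \<le> x" using sub \<open>0 \<notin> D\<close> by (metis atLeast_iff int_one_le_iff_zero_less order_le_less subsetD)
  then have "1 \<le> Inf D" using ne by (intro cInf_greatest) auto
  then show False using inf by simp
qed

lemma large_in:
  assumes "0 < m" "0 < n" "coprime m n" "is_semimodule m n D" "zero_normalized D"
    and "x > int m * int n - int m - int n"
  shows "x \<in> D"
proof -
  have "int m * int n - int m - int n - x \<notin> Gamma m n" using assms(6) gamma_nonneg by force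
  then have "x \<in> Gamma m n" using gamma_sym[OF assms(1-3)] by blast
  then have "0 + x \<in> D" using zero_in[OF assms(4,5)] assms(4) unfolding is_semimodule_def by blast
  then show ?thesis by simp
qed

lemma dual_iff:
  assumes "0 < m" "0 < n" "coprime m n" "is_semimodule m n D"
  shows "\<phi> \<in> dual m n D \<longleftrightarrow> int m * int n - int m - int n - \<phi> \<notin> D"
proof
  assume a: "\<phi> \<in> dual m n D"
  show "int m * int n - int m - int n - \<phi> \<notin> D"
  proof
    assume "int m * int n - int m - int n - \<phi> \<in> D"
    then have "\<phi> + (int m * int n - int m - int n - \<phi>) \<in> Gamma m n" using a unfolding dual_def by blast
    moreover have "int 0 * int m + int 0 * int n \<in> Gamma m n" unfolding Gamma_def by blast
    ultimately show False using gamma_sym[OF assms(1-3), of 0] by (simp add: algebra_simps)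
  qed
next
  assume a: "int m * int n - int m - int n - \<phi> \<notin> D"
  show "\<phi> \<in> dual m n D" unfolding dual_def
  proof (intro CollectI ballI)
    fix d assume d: "d \<in> D"
    show "\<phi> + d \<in> Gamma m n"
    proof (rule ccontr)
      assume "\<phi> + d \<notin> Gamma m n"
      then have "int m * int n - int m - int n - (\<phi> + d) \<in> Gamma m n" using gamma_sym[OF assms(1-3)] by blast
      then have "d + (int m * int n - int m - int n - (\<phi> + d)) \<in> D" using d assms(4) unfolding is_semimodule_def by blast
      then show False using a by (simp add: algebra_simps)
    qed
  qed
qed

lemma hat_iff:
  assumes "0 < m" "0 < n" "coprime m n" "is_semimodule m n D" "zero_normalized D"
  defines "g \<equiv> Max {x. -1 \<le> x \<and> x \<notin> D}"
  shows "g \<notin> D" "\<forall>x>g. x \<in> D" "\<forall>e. e \<in> hat m n D \<longleftrightarrow> g - e \<notin> D"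
proof -
  define F where "F = int m * int n - int m - int n"
  have sub: "D \<subseteq> {0..}" using assms(4) unfolding is_semimodule_def by blast
  have fin: "finite {x. -1 \<le> x \<and> x \<notin> D}"
    by (rule finite_subset[of _ "{-1..F}"]) (use large_in[OF assms(1-5)] in \<open>force simp: F_def not_le\<close>)+
  have m1: "-1 \<in> {x. -1 \<le> x \<and> x \<notin> D}" using sub by auto
  have gin: "g \<in> {x. -1 \<le> x \<and> x \<notin> D}" unfolding g_def using fin m1 by (intro Max_in) auto
  then show "g \<notin> D" by simp
  have gge: "g \<ge> -1" using gin by simp
  have big: "\<forall>x>g. x \<in> D"
  proof (intro allI impI)
    fix x assume "x > g"
    show "x \<in> D"
    proof (rule ccontr)
      assume "x \<notin> D"
      then have "x \<le> g" unfolding g_def using fin \<open>x > g\<close> gge by (intro Max_ge) auto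
      then show False using \<open>x > g\<close> by simp
    qed
  qed
  then show "\<forall>x>g. x \<in> D" .
  have dI: "\<phi> \<in> dual m n D \<longleftrightarrow> F - \<phi> \<notin> D" for \<phi> unfolding F_def by (rule dual_iff[OF assms(1-4)])
  have "Inf (dual m n D) = F - g"
  proof (rule cInf_eq_minimum)
    show "F - g \<in> dual m n D" using dI \<open>g \<notin> D\<close> by simp
    fix x assume "x \<in> dual m n D"
    then have "F - x \<notin> D" using dI by simp
    then have "F - x \<le> g" using big by (meson not_le)
    then show "F - g \<le> x" by simp
  qed
  then show "\<forall>e. e \<in> hat m n D \<longleftrightarrow> g - e \<notin> D"
    unfolding hat_def
  proof (intro allI iffI)
    fix e
    assume "Inf (dual m n D) = F - g" "e \<in> (\<lambda>\<phi>. \<phi> - Inf (dual m n D)) ` dual m n D"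
    then obtain \<phi> where "\<phi> \<in> dual m n D" "e = \<phi> - (F - g)" by auto
    then have "g - e = F - \<phi>" by simp
    then show "g - e \<notin> D" using dI \<open>\<phi> \<in> dual m n D\<close> by simp
  next
    fix e
    assume i: "Inf (dual m n D) = F - g" "g - e \<notin> D"
    have "e + (F - g) \<in> dual m n D" using dI i(2) by (simp add: algebra_simps)
    then show "e \<in> (\<lambda>\<phi>. \<phi> - Inf (dual m n D)) ` dual m n D" using i(1)
      by (intro image_eqI[of _ _ "e + (F - g)"]) auto
  qed
qed


definition cnt :: "int set \<Rightarrow> int \<Rightarrow> nat" where
  "cnt D y = card {x\<in>D. 0 \<le> x \<and> x < y}"

lemma cnt_fin: "finite {x\<in>D. 0 \<le> x \<and> x < (y::int)}"
  by (rule finite_subset[of _ "{0..<y}"]) auto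

lemma cnt_mono: "a \<le> b \<Longrightarrow> cnt D a \<le> cnt D b"
  unfolding cnt_def by (rule card_mono[OF cnt_fin]) auto

lemma cnt_strict: "a \<in> D \<Longrightarrow> 0 \<le> a \<Longrightarrow> a < b \<Longrightarrow> cnt D a < cnt D b"
  unfolding cnt_def by (rule psubset_card_mono[OF cnt_fin]) auto

lemma cnt_zero: "cnt D 0 = 0"
  unfolding cnt_def by (simp add: card_eq_0_iff)

lemma cnt_step: "0 \<le> t \<Longrightarrow> cnt D (t+1) = cnt D t + (if t \<in> D then 1 else 0)"
proof -
  assume t: "0 \<le> t"
  have eq: "{x\<in>D. 0 \<le> x \<and> x < t+1} = {x\<in>D. 0 \<le> x \<and> x < t} \<union> (if t \<in> D then {t} else {})"
    using t by (auto simp: order_le_less)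
  show ?thesis unfolding cnt_def eq using cnt_fin[of D t] by (auto simp: card_insert_if)
qed

lemma cnt_ivt:
  fixes j :: nat and y :: int
  assumes "1 \<le> j" "j \<le> cnt D y"
  shows "\<exists>d\<in>D. 0 \<le> d \<and> d < y \<and> cnt D d = j - 1"
proof -
  have "y \<ge> 1"
  proof (rule ccontr)
    assume "\<not> y \<ge> 1"
    then have "cnt D y \<le> cnt D 0" by (intro cnt_mono) simp
    then show False using assms cnt_zero[of D] by simp
  qed
  define P where "P s \<longleftrightarrow> j \<le> cnt D (int s + 1)" for s
  have Py: "P (nat (y - 1))" unfolding P_def using \<open>y \<ge> 1\<close> assms(2) by simp
  define s0 where "s0 = (LEAST s. P s)"
  have P0: "P s0" unfolding s0_def using Py by (rule LeastI)
  have lt: "cnt D (int s0) < j"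
  proof (cases s0)
    case 0 then show ?thesis using assms(1) cnt_zero[of D] by simp
  next
    case (Suc s')
    have "\<not> P s'" unfolding s0_def using Suc s0_def by (metis lessI not_less_Least)
    then show ?thesis unfolding P_def using Suc by (simp add: algebra_simps)
  qed
  have st: "cnt D (int s0 + 1) = cnt D (int s0) + (if int s0 \<in> D then 1 else 0)"
    by (rule cnt_step) simp
  have inD: "int s0 \<in> D" using st lt P0 unfolding P_def by (auto split: if_splits)
  have eqj: "cnt D (int s0) = j - 1" using st lt P0 inD unfolding P_def by simp
  have "int s0 < y"
  proof (rule ccontr)
    assume "\<not> int s0 < y"
    then have "cnt D y \<le> cnt D (int s0)" by (intro cnt_mono) simp
    then show False using lt assms(2) by simp
  qed
  then show ?thesis using inD eqj by (intro bexI[of _ "int s0"]) auto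
qed


lemma conj_main:
  fixes D E :: "int set" and g :: int
  assumes sub: "D \<subseteq> {0..}" and z: "0 \<in> D" and gD: "g \<notin> D" and big: "\<forall>x>g. x \<in> D"
    and Eiff: "\<forall>e. e \<in> E \<longleftrightarrow> g - e \<notin> D"
  shows "partP E = conjugate (partP D)"
proof -
  define G where "G = {y. 0 \<le> y \<and> y \<notin> D}"
  define A where "A = {d\<in>D. d \<le> g}"
  define k where "k d = card {y\<in>G. d < y}" for d
  define h where "h j = card {y\<in>G. j \<le> cnt D y}" for j
  define S where "S = sum_mset (partP D)"
  have Gle: "y \<in> G \<Longrightarrow> y \<le> g" for y using big unfolding G_def by (auto simp: not_le[symmetric])
  have finG: "finite G" by (rule finite_subset[of _ "{0..g}"]) (auto simp: G_def intro: Gle[unfolded G_def])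
  have finA: "finite A" by (rule finite_subset[of _ "{0..g}"]) (use sub in \<open>auto simp: A_def\<close>)
  have Gpos: "y \<in> G \<Longrightarrow> 0 < cnt D y" for y
    using cnt_strict[of 0 D y] cnt_zero[of D] z unfolding G_def by (cases "y = 0") auto
  have PD: "partP D = image_mset (cnt D) (mset_set G)"
  proof -
    have "{x\<in>G. 0 < cnt D x} = G" using Gpos by auto
    then show ?thesis using finG unfolding partP_def cnt_def[symmetric] G_def[symmetric]
      by (simp add: filter_mset_image_mset filter_mset_mset_set)
  qed
  have hsize: "size (filter_mset (\<lambda>p. j \<le> p) (partP D)) = h j" for j
    unfolding PD h_def using finG by (simp add: filter_mset_image_mset filter_mset_mset_set)
  have conjD: "conjugate (partP D) = image_mset h (mset_set {j\<in>{1..<Suc S}. 0 < h j})"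
    unfolding conjugate_def S_def[symmetric] hsize mset_map mset_upt
    by (simp add: filter_mset_image_mset filter_mset_mset_set)
  have GE: "{y. 0 \<le> y \<and> y \<notin> E} = (\<lambda>d. g - d) ` A"
  proof (intro set_eqI iffI)
    fix y assume "y \<in> {y. 0 \<le> y \<and> y \<notin> E}"
    then have "0 \<le> y" "g - y \<in> D" using Eiff by auto
    then show "y \<in> (\<lambda>d. g - d) ` A" unfolding A_def by (intro image_eqI[of _ _ "g - y"]) auto
  next
    fix y assume "y \<in> (\<lambda>d. g - d) ` A"
    then obtain d where "d \<in> D" "d \<le> g" "y = g - d" unfolding A_def by auto
    then show "y \<in> {y. 0 \<le> y \<and> y \<notin> E}" using Eiff by auto
  qed
  have injA: "inj_on (\<lambda>d. g - d) A" by (auto simp: inj_on_def)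
  have cE: "card {x\<in>E. 0 \<le> x \<and> x < g - d} = k d" if "d \<in> D" for d
  proof -
    have d0: "0 \<le> d" using that sub by auto
    have "{x\<in>E. 0 \<le> x \<and> x < g - d} = (\<lambda>y. g - y) ` {y\<in>G. d < y}"
    proof (intro set_eqI iffI)
      fix x assume x: "x \<in> {x\<in>E. 0 \<le> x \<and> x < g - d}"
      then have "g - x \<notin> D" using Eiff by auto
      then show "x \<in> (\<lambda>y. g - y) ` {y\<in>G. d < y}" using x d0 unfolding G_def
        by (intro image_eqI[of _ _ "g - x"]) auto
    next
      fix x assume "x \<in> (\<lambda>y. g - y) ` {y\<in>G. d < y}"
      then obtain y where y: "y \<in> G" "d < y" "x = g - y" by auto
      then show "x \<in> {x\<in>E. 0 \<le> x \<and> x < g - d}" using Eiff Gle[OF y(1)] unfolding G_def by auto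
    qed
    then show ?thesis unfolding k_def by (simp add: card_image inj_on_def)
  qed
  have PE: "partP E = image_mset k (mset_set {d\<in>A. 0 < k d})"
  proof -
    have "partP E = filter_mset (\<lambda>k. 0 < k)
       (image_mset (\<lambda>y. card {x\<in>E. 0 \<le> x \<and> x < y}) (image_mset (\<lambda>d. g - d) (mset_set A)))"
      unfolding partP_def GE image_mset_mset_set[OF injA] ..
    also have "image_mset (\<lambda>y. card {x\<in>E. 0 \<le> x \<and> x < y}) (image_mset (\<lambda>d. g - d) (mset_set A))
        = image_mset k (mset_set A)"
      unfolding multiset.map_comp
    proof (rule image_mset_cong)
      fix d assume "d \<in># mset_set A"
      then have "d \<in> D" using finA unfolding A_def by simp
      then show "((\<lambda>y. card {x\<in>E. 0 \<le> x \<and> x < y}) \<circ> (\<lambda>d. g - d)) d = k d" using cE by simp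
    qed
    finally show ?thesis using finA by (simp add: filter_mset_image_mset filter_mset_mset_set)
  qed
  define rk where "rk d = cnt D d + 1" for d
  have hk: "h (rk d) = k d" if "d \<in> D" for d
  proof -
    have d0: "0 \<le> d" using that sub by auto
    have "{y\<in>G. rk d \<le> cnt D y} = {y\<in>G. d < y}"
    proof (intro set_eqI iffI)
      fix y assume y: "y \<in> {y\<in>G. rk d \<le> cnt D y}"
      show "y \<in> {y\<in>G. d < y}"
      proof (rule ccontr)
        assume "y \<notin> {y\<in>G. d < y}"
        then have "y \<le> d" using y by auto
        then have "cnt D y \<le> cnt D d" by (rule cnt_mono)
        then show False using y unfolding rk_def by simp
      qed
    next
      fix y assume "y \<in> {y\<in>G. d < y}"
      then show "y \<in> {y\<in>G. rk d \<le> cnt D y}" using cnt_strict[OF that d0] unfolding rk_def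
        by (simp add: Suc_le_eq)
    qed
    then show ?thesis unfolding h_def k_def by simp
  qed
  have injrk: "inj_on rk A"
  proof (rule inj_onI)
    fix a b assume a: "a \<in> A" and b: "b \<in> A" and e: "rk a = rk b"
    have a0: "0 \<le> a" "a \<in> D" and b0: "0 \<le> b" "b \<in> D" using a b sub unfolding A_def by auto
    show "a = b"
    proof (rule linorder_cases[of a b])
      assume "a < b" then show ?thesis using cnt_strict[OF a0(2) a0(1), of b] e unfolding rk_def by simp
    next
      assume "b < a" then show ?thesis using cnt_strict[OF b0(2) b0(1), of a] e unfolding rk_def by simp
    qed
  qed
  have img: "rk ` {d\<in>A. 0 < k d} = {j\<in>{1..<Suc S}. 0 < h j}"
  proof (intro set_eqI iffI)
    fix j assume "j \<in> rk ` {d\<in>A. 0 < k d}"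
    then obtain d where d: "d \<in> A" "0 < k d" "j = rk d" by auto
    have dD: "d \<in> D" "0 \<le> d" using d sub unfolding A_def by auto
    have "{y\<in>G. d < y} \<noteq> {}" using d(2) unfolding k_def by (intro notI) simp
    then obtain y where y: "y \<in> G" "d < y" by blast
    have "cnt D y \<in># partP D" unfolding PD using y finG by simp
    then have "S = cnt D y + sum_mset (partP D - {#cnt D y#})" unfolding S_def by (rule sum_mset.remove)
    then have "cnt D y \<le> S" by simp
    moreover have "cnt D d < cnt D y" using cnt_strict[OF dD(1,2) y(2)] .
    ultimately have "j \<le> S" using d(3) unfolding rk_def by simp
    moreover have "0 < h j" using hk[OF dD(1)] d by simp
    ultimately show "j \<in> {j\<in>{1..<Suc S}. 0 < h j}" using d(3) unfolding rk_def by auto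
  next
    fix j assume j: "j \<in> {j\<in>{1..<Suc S}. 0 < h j}"
    then have "{y\<in>G. j \<le> cnt D y} \<noteq> {}" unfolding h_def by (intro notI) simp
    then obtain y where y: "y \<in> G" "j \<le> cnt D y" by blast
    have "1 \<le> j" using j by simp
    then obtain d where d: "d \<in> D" "0 \<le> d" "d < y" "cnt D d = j - 1" using cnt_ivt[OF _ y(2)] by blast
    have "d \<le> g" using d(3) Gle[OF y(1)] by simp
    moreover have "rk d = j" using d(4) \<open>1 \<le> j\<close> unfolding rk_def by simp
    moreover have "0 < k d" using hk[OF d(1)] \<open>rk d = j\<close> j by simp
    ultimately show "j \<in> rk ` {d\<in>A. 0 < k d}" using d(1) unfolding A_def by blast
  qed
  have "image_mset k (mset_set {d\<in>A. 0 < k d}) = image_mset h (image_mset rk (mset_set {d\<in>A. 0 < k d}))"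
    unfolding multiset.map_comp
  proof (rule image_mset_cong)
    fix d assume "d \<in># mset_set {d\<in>A. 0 < k d}"
    moreover have "finite {d\<in>A. 0 < k d}" using finA by simp
    ultimately have "d \<in> D" unfolding A_def by simp
    then show "k d = (h \<circ> rk) d" using hk by simp
  qed
  also have "\<dots> = image_mset h (mset_set {j\<in>{1..<Suc S}. 0 < h j})"
  proof -
    have "inj_on rk {d\<in>A. 0 < k d}" by (rule inj_on_subset[OF injrk]) auto
    then show ?thesis by (simp only: image_mset_mset_set img)
  qed
  finally show ?thesis using PE conjD by simp
qed


theorem mainTheorem11:
  fixes m n :: nat and D :: "int set"
  assumes "0 < m" "0 < n" "coprime m n"
    and "is_semimodule m n D" "zero_normalized D"
  shows "partP (hat m n D) = conjugate (partP D)"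
proof (rule conj_main)
  show "D \<subseteq> {0..}" using assms(4) unfolding is_semimodule_def by blast
  show "0 \<in> D" by (rule zero_in[OF assms(4,5)])
  show "Max {x. -1 \<le> x \<and> x \<notin> D} \<notin> D" by (rule hat_iff(1)[OF assms])
  show "\<forall>x>Max {x. -1 \<le> x \<and> x \<notin> D}. x \<in> D" by (rule hat_iff(2)[OF assms])
  show "\<forall>e. e \<in> hat m n D \<longleftrightarrow> Max {x. -1 \<le> x \<and> x \<notin> D} - e \<notin> D" by (rule hat_iff(3)[OF assms])
qed

end
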